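(* Let $\alpha_1=\sqrt{-106+34\sqrt{19}}$, $\alpha_2=-10+10\sqrt{19}$, $\alpha_3=16-16\sqrt{19}$, $\alpha_4=-13+3\sqrt{19}$, $\alpha_5=\sqrt{-77798+1162\sqrt{4691}}$, $\alpha_6=-\frac{354}{5}+\frac{6\sqrt{4691}}{5}$, $\alpha_7=-\frac{2183}{35}+\frac{27}{35}\sqrt{4691}$. Each of the following systems has an isochronous center at the origin $O$ with zero Urabe function (in systems with $\pm,\mp$, upper signs throughout or lower signs throughout): (i) $\dot x=-y+(-2+2\sqrt{19})x^2y+x^2-(-2+2\sqrt{19})x^4$, $\dot y=x\pm\alpha_1y^2-2xy\mp\frac{\alpha_1}{2}x^2+\alpha_2xy^2\mp2\alpha_1x^2y+\alpha_4x^3+\alpha_3x^3y\pm4\alpha_1x^4$; (ii) for every $a\in\mathbb R$: $\dot x=-y+axy+\frac{15}{8}a^2x^2y+x^2-ax^3-\frac{15}{8}a^2x^4$, $\dot y=x-\frac a2y^2-2xy+\frac{3a}{4}x^2+\frac{15}{4}a^2xy^2+3ax^2y+2x^3-\frac{15}{4}a^2x^3y-\frac{5a}{2}x^4$; (iii) $\dot x=-y\mp\frac{2}{35}\alpha_5xy+\alpha_6x^2y+x^2\pm\frac2{35}\alpha_5x^3-\alpha_6x^4$, $\dot y=x\pm\frac{\alpha_5}{35}y^2-2xy\mp\frac3{70}\alpha_5x^2+5\alpha_6xy^2\mp\frac6{35}\alpha_5x^2y+\alpha_7x^3-8\alpha_6x^3y\pm\frac{38}{35}\alpha_5x^4$.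
   Context: For a real planar polynomial system $\dot x=-y+A(x,y)$, $\dot y=x+B(x,y)$, with $A,B$ polynomials having no terms of degree $<2$, the origin $O$ is an isochronous center if there is a punctured neighborhood of $O$ in which every orbit is a closed orbit surrounding $O$ and all these orbits have the same period. Zero Urabe function: write the system as $\dot x=p_0(x)+p_1(x)y$, $\dot y=q_0(x)+q_1(x)y+q_2(x)y^2$ ($p_0(0)=q_0(0)=0$, $p_1(0)\ne0$), where it holds that $-\frac{p_1'p_0}{p_1}+q_1+p_0'-\frac{2q_2p_0}{p_1}\equiv0$. Put $f=-\frac{q_2+p_1'}{p_1}$, $g=-\frac{q_2p_0^2}{p_1}+q_1p_0-p_1q_0$ (the change $z=p_0+p_1y$ gives $\dot x=z$, $\dot z=-g(x)-f(x)z^2$), $F(x)=\int_0^xf$, and $\xi$ near $0$ by $\frac12\xi(x)^2=\int_0^xg(s)e^{2F(s)}ds$, $x\xi(x)>0$ for $x\ne0$. The Urabe function of an isochronous center is the odd analytic $h$ with $\frac{\xi(x)}{1+h(\xi(x))}=g(x)e^{F(x)}$; "zero Urabe function" means $h\equiv0$, i.e. $\xi(x)=g(x)e^{F(x)}$ near $0$. *)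

theory Defs
  imports "HOL-Analysis.Analysis"
begin

text \<open>Planar vector fields are functions real \<times> real \<Rightarrow> real \<times> real; the system is
  x' = fst (V (x,y)), y' = snd (V (x,y)).\<close>

definition oint :: "real \<Rightarrow> real \<Rightarrow> (real \<Rightarrow> real) \<Rightarrow> real" where
  "oint a b h = (if a \<le> b then integral {a..b} h else - integral {b..a} h)"

definition isochronous_center :: "(real \<times> real \<Rightarrow> real \<times> real) \<Rightarrow> bool" where
  "isochronous_center V \<longleftrightarrow>
     (\<exists>U T. open U \<and> (0::real\<times>real) \<in> U \<and> T > 0 \<and>
        (\<forall>p \<in> U - {0}. \<exists>\<phi> :: real \<Rightarrow> real \<times> real.
            \<phi> 0 = p \<and>
            (\<forall>t. (\<phi> has_vector_derivative V (\<phi> t)) (at t)) \<and>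
            (\<forall>t. \<phi> (t + T) = \<phi> t) \<and>
            (\<forall>s. 0 < s \<and> s < T \<longrightarrow> \<phi> s \<noteq> p) \<and>
            0 \<in> inside (range \<phi>)))"

text \<open>Zero Urabe function, following the paper: the system is written as
  x' = p0 x + p1 x * y, y' = q0 x + q1 x * y + q2 x * y^2 with p0 0 = q0 0 = 0, p1 0 \<noteq> 0,
  the compatibility identity holds, and with f, g, F as in the paper the function
  g(x) e^{F(x)} is the function \<xi> near 0 (i.e. satisfies (1/2) \<xi>^2 = \<integral>_0^x g e^{2F} and
  x \<xi>(x) > 0 for x \<noteq> 0), i.e. h \<equiv> 0.\<close>
definition urabe_f :: "(real \<Rightarrow> real) \<Rightarrow> (real \<Rightarrow> real) \<Rightarrow> real \<Rightarrow> real" where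
  "urabe_f p1 q2 x = - (q2 x + deriv p1 x) / p1 x"

definition urabe_g ::
  "(real \<Rightarrow> real) \<Rightarrow> (real \<Rightarrow> real) \<Rightarrow> (real \<Rightarrow> real) \<Rightarrow> (real \<Rightarrow> real) \<Rightarrow> (real \<Rightarrow> real) \<Rightarrow> real \<Rightarrow> real" where
  "urabe_g p0 p1 q0 q1 q2 x = - q2 x * (p0 x)\<^sup>2 / p1 x + q1 x * p0 x - p1 x * q0 x"

definition urabe_F :: "(real \<Rightarrow> real) \<Rightarrow> (real \<Rightarrow> real) \<Rightarrow> real \<Rightarrow> real" where
  "urabe_F p1 q2 x = oint 0 x (urabe_f p1 q2)"

definition zero_urabe_decomp ::
  "(real \<Rightarrow> real) \<Rightarrow> (real \<Rightarrow> real) \<Rightarrow> (real \<Rightarrow> real) \<Rightarrow> (real \<Rightarrow> real) \<Rightarrow> (real \<Rightarrow> real) \<Rightarrow> bool" where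
  "zero_urabe_decomp p0 p1 q0 q1 q2 \<longleftrightarrow>
     p0 0 = 0 \<and> q0 0 = 0 \<and> p1 0 \<noteq> 0 \<and>
     (\<forall>x. p1 x \<noteq> 0 \<longrightarrow>
        - deriv p1 x * p0 x / p1 x + q1 x + deriv p0 x - 2 * q2 x * p0 x / p1 x = 0) \<and>
     (\<exists>\<delta>>0. \<forall>x. \<bar>x\<bar> < \<delta> \<longrightarrow>
        (let g = urabe_g p0 p1 q0 q1 q2; F = urabe_F p1 q2; \<xi> = g x * exp (F x) in
           (1/2) * \<xi>\<^sup>2 = oint 0 x (\<lambda>s. g s * exp (2 * F s)) \<and>
           (x \<noteq> 0 \<longrightarrow> x * \<xi> > 0)))"

text \<open>A polynomial system has zero Urabe function if, written in the form above
  (this decomposition is unique), the conditions hold.\<close>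
definition zero_urabe :: "(real \<times> real \<Rightarrow> real \<times> real) \<Rightarrow> bool" where
  "zero_urabe V \<longleftrightarrow>
     (\<exists>p0 p1 q0 q1 q2 :: real \<Rightarrow> real.
        (\<forall>x y. V (x, y) = (p0 x + p1 x * y, q0 x + q1 x * y + q2 x * y\<^sup>2)) \<and>
        zero_urabe_decomp p0 p1 q0 q1 q2)"

definition "alpha1 = sqrt (-106 + 34 * sqrt 19)"
definition "alpha2 = -10 + 10 * sqrt 19"
definition "alpha3 = 16 - 16 * sqrt 19"
definition "alpha4 = -13 + 3 * sqrt 19"
definition "alpha5 = sqrt (-77798 + 1162 * sqrt 4691)"
definition "alpha6 = -354/5 + 6 * sqrt 4691 / 5"
definition "alpha7 = -2183/35 + 27/35 * sqrt 4691"

end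

theory Submission
  imports Defs
begin


lemma oint_ftc:
  fixes H h :: "real \<Rightarrow> real"
  assumes "\<And>t. t \<in> closed_segment 0 x \<Longrightarrow> (H has_real_derivative h t) (at t)"
  shows "oint 0 x h = H x - H 0"
proof (cases "0 \<le> x")
  case True
  have "(h has_integral H x - H 0) {0..x}"
    apply (rule fundamental_theorem_of_calculus[OF True])
    using assms True
    by (auto simp: closed_segment_eq_real_ivl has_real_derivative_iff_has_vector_derivative[symmetric]
        intro: has_field_derivative_at_within)
  then show ?thesis using True by (simp add: oint_def integral_unique)
next
  case False
  have "(h has_integral H 0 - H x) {x..0}"
    apply (rule fundamental_theorem_of_calculus)
    using assms False
    by (auto simp: closed_segment_eq_real_ivl has_real_derivative_iff_has_vector_derivative[symmetric]
        intro: has_field_derivative_at_within)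
  then show ?thesis using False by (simp add: oint_def integral_unique)
qed

lemma key_alg:
  fixes P0 P1 Q0 Q1 Q2 DP0 DP1 U W E fX :: real
  assumes nz: "P1 \<noteq> 0"
    and hf: "fX = - (Q2 + DP1) / P1"
    and hU: "U * E = - Q2 * P0\<^sup>2 / P1 + Q1 * P0 - P1 * Q0"
    and cp: "- DP1 * P0 + Q1 * P1 + DP0 * P1 - 2 * Q2 * P0 = 0"
  shows "((- U * E + E * (- (fX * (E * W))) * W - DP0 * (E * W)) * P1
          - (W * E - P0) * (DP1 * (E * W))) / (P1 * P1)
       = Q0 + Q1 * ((W * E - P0) / P1) + Q2 * ((W * E - P0) / P1)\<^sup>2"
proof -
  have hU': "U * E * P1 + Q2 * P0\<^sup>2 - Q1 * P0 * P1 + P1 * P1 * Q0 = 0"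
    using hU nz by (simp add: field_simps power2_eq_square)
  show ?thesis
    unfolding hf using nz apply (simp add: field_simps power2_eq_square)
    using hU' cp by algebra
qed

locale usys =
  fixes p0 p1 q0 q1 q2 dp0 dp1 dq0 dq1 dq2 :: "real \<Rightarrow> real"
  assumes d_p0: "\<And>x. (p0 has_real_derivative dp0 x) (at x)"
    and d_p1: "\<And>x. (p1 has_real_derivative dp1 x) (at x)"
    and d_q0: "\<And>x. (q0 has_real_derivative dq0 x) (at x)"
    and d_q1: "\<And>x. (q1 has_real_derivative dq1 x) (at x)"
    and d_q2: "\<And>x. (q2 has_real_derivative dq2 x) (at x)"
    and cont_dp1: "continuous_on UNIV dp1"
    and p00: "p0 0 = 0" and q00: "q0 0 = 0" and p10: "p1 0 \<noteq> 0"
    and compat: "\<And>x. - dp1 x * p0 x + q1 x * p1 x + dp0 x * p1 x - 2 * q2 x * p0 x = 0"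
    and gid: "\<And>x. (-(dq2 x * (p0 x)^2 + 2 * q2 x * p0 x * dp0 x) + dq1 x * p0 x * p1 x
       + q1 x * dp0 x * p1 x + q1 x * p0 x * dp1 x - 2 * p1 x * dp1 x * q0 x - (p1 x)^2 * dq0 x) * p1 x
       - 2 * (- q2 x * (p0 x)^2 + q1 x * p0 x * p1 x - (p1 x)^2 * q0 x) * dp1 x
       - q2 x * (- q2 x * (p0 x)^2 + q1 x * p0 x * p1 x - (p1 x)^2 * q0 x) = (p1 x)^2"
begin

definition "V = (\<lambda>(x::real, y::real). (p0 x + p1 x * y, q0 x + q1 x * y + q2 x * y^2))"
lemma V_apply: "V (x, y) = (p0 x + p1 x * y, q0 x + q1 x * y + q2 x * y^2)"
  by (simp add: V_def)

definition "G x = - q2 x * (p0 x)^2 + q1 x * p0 x * p1 x - (p1 x)^2 * q0 x"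
definition "dG x = -(dq2 x * (p0 x)^2 + 2 * q2 x * p0 x * dp0 x) + dq1 x * p0 x * p1 x
       + q1 x * dp0 x * p1 x + q1 x * p0 x * dp1 x - 2 * p1 x * dp1 x * q0 x - (p1 x)^2 * dq0 x"
definition "f = urabe_f p1 q2"
definition "g = urabe_g p0 p1 q0 q1 q2"
definition "F = urabe_F p1 q2"

lemma gid': "dG x * p1 x - 2 * G x * dp1 x - q2 x * G x = (p1 x)^2"
  unfolding G_def dG_def by (rule gid)

lemma deriv_p1: "deriv p1 = dp1" by (rule ext, rule DERIV_imp_deriv, rule d_p1)
lemma deriv_p0: "deriv p0 = dp0" by (rule ext, rule DERIV_imp_deriv, rule d_p0)
lemma f_fun: "f = (\<lambda>x. - (q2 x + dp1 x) / p1 x)"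
  unfolding f_def urabe_f_def deriv_p1 ..

lemma isCont_p0: "isCont p0 x" using d_p0 by (rule DERIV_isCont)
lemma isCont_p1: "isCont p1 x" using d_p1 by (rule DERIV_isCont)
lemma isCont_q0: "isCont q0 x" using d_q0 by (rule DERIV_isCont)
lemma isCont_q1: "isCont q1 x" using d_q1 by (rule DERIV_isCont)
lemma isCont_q2: "isCont q2 x" using d_q2 by (rule DERIV_isCont)
lemma isCont_dp1: "isCont dp1 x" using cont_dp1 by (simp add: continuous_on_eq_continuous_at)

lemma d_G: "(G has_real_derivative dG x) (at x)"
  unfolding G_def[abs_def] dG_def
  by (auto intro!: derivative_eq_intros d_p0 d_p1 d_q0 d_q1 d_q2 simp: algebra_simps power2_eq_square)

end

locale usys2 = usys +
  fixes d :: real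
  assumes d_pos: "0 < d" and p1_nz: "\<And>x. \<bar>x\<bar> \<le> d \<Longrightarrow> p1 x \<noteq> 0"
begin

lemma f_cont: "continuous_on {-d..d} f"
  unfolding f_fun
  by (intro continuous_at_imp_continuous_on ballI continuous_intros isCont_q2 isCont_dp1 isCont_p1 p1_nz) auto

definition "F0 x = integral {-d..x} f"

lemma F0_deriv: assumes "\<bar>x\<bar> < d" shows "(F0 has_real_derivative f x) (at x)"
proof -
  have "(F0 has_vector_derivative f x) (at x within {-d..d})"
    unfolding F0_def[abs_def] using assms by (intro integral_has_vector_derivative f_cont) auto
  moreover have "x \<in> interior {-d..d}" using assms by auto
  ultimately have "(F0 has_vector_derivative f x) (at x)"
    by (metis at_within_interior)
  then show ?thesis
    by (simp add: has_real_derivative_iff_has_vector_derivative)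
qed

lemma F_eq: assumes "\<bar>x\<bar> < d" shows "F x = F0 x - F0 0"
  unfolding F_def urabe_F_def f_def[symmetric]
  by (rule oint_ftc, rule F0_deriv) (use assms in \<open>auto simp: closed_segment_eq_real_ivl split: if_splits\<close>)

lemma F_deriv: assumes "\<bar>x\<bar> < d" shows "(F has_real_derivative f x) (at x)"
proof -
  have "((\<lambda>x. F0 x - F0 0) has_real_derivative f x) (at x)"
    using DERIV_diff[OF F0_deriv[OF assms] DERIV_const[of "F0 0"]] by simp
  then show ?thesis
    by (rule has_field_derivative_transform_within_open[where S="{-d<..<d}"])
       (use assms F_eq in auto)
qed

lemma F_0: "F 0 = 0" unfolding F_def urabe_F_def oint_def by simp

lemma g_deriv: assumes "\<bar>x\<bar> < d"
  shows "(g has_real_derivative (dG x * p1 x - G x * dp1 x) / (p1 x * p1 x)) (at x)"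
proof -
  have "((\<lambda>x. G x / p1 x) has_real_derivative (dG x * p1 x - G x * dp1 x) / (p1 x * p1 x)) (at x)"
    by (rule DERIV_divide[OF d_G d_p1]) (use assms p1_nz in auto)
  then show ?thesis
  proof (rule has_field_derivative_transform_within_open[where S="{-d<..<d}"])
    fix y assume "y \<in> {-d<..<d}"
    then have "p1 y \<noteq> 0" using p1_nz by auto
    then show "G y / p1 y = g y"
      unfolding G_def g_def urabe_g_def by (simp add: field_simps power2_eq_square)
  qed (use assms in auto)
qed

definition "xi x = g x * exp (F x)"

lemma xi_deriv: assumes "\<bar>x\<bar> < d" shows "(xi has_real_derivative exp (F x)) (at x)"
proof -
  have nz: "p1 x \<noteq> 0" using p1_nz assms by auto
  have gx: "g x = G x / p1 x"
    unfolding G_def g_def urabe_g_def using nz by (simp add: field_simps power2_eq_square)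
  have key: "(dG x * p1 x - G x * dp1 x) / (p1 x * p1 x) + g x * f x = 1"
    using gid'[of x] nz unfolding gx f_fun by (simp add: field_simps power2_eq_square)
  have "(xi has_real_derivative (dG x * p1 x - G x * dp1 x) / (p1 x * p1 x) * exp (F x) + exp (F x) * f x * g x) (at x)"
    unfolding xi_def[abs_def]
    by (intro DERIV_mult g_deriv DERIV_exp[THEN DERIV_chain2] F_deriv assms)
  moreover have "(dG x * p1 x - G x * dp1 x) / (p1 x * p1 x) * exp (F x) + exp (F x) * f x * g x = exp (F x)"
    proof -
    have "(dG x * p1 x - G x * dp1 x) / (p1 x * p1 x) * exp (F x) + exp (F x) * f x * g x
       = ((dG x * p1 x - G x * dp1 x) / (p1 x * p1 x) + g x * f x) * exp (F x)"
      by (simp add: algebra_simps)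
    then show ?thesis using key by simp
  qed
  ultimately show ?thesis by simp
qed

lemma g_0: "g 0 = 0" unfolding g_def urabe_g_def by (simp add: p00 q00)
lemma xi_0: "xi 0 = 0" unfolding xi_def by (simp add: g_0)

lemma xi_mono: assumes "-d < a" "a < b" "b < d" shows "xi a < xi b"
proof (rule DERIV_pos_imp_increasing[OF assms(2)])
  fix x assume "a \<le> x" "x \<le> b"
  then have "\<bar>x\<bar> < d" using assms by auto
  then have "(xi has_real_derivative exp (F x)) (at x)" by (rule xi_deriv)
  then show "\<exists>y. (xi has_real_derivative y) (at x) \<and> 0 < y"
    using exp_gt_zero by blast
qed

lemma xi_sign: assumes "\<bar>x\<bar> < d" "x \<noteq> 0" shows "x * xi x > 0"
proof (cases "x > 0")
  case True
  have "xi 0 < xi x" by (rule xi_mono) (use assms True d_pos in auto)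
  then have "xi x > 0" by (simp add: xi_0)
  then show ?thesis by (rule mult_pos_pos[OF True])
next
  case False
  then have x: "x < 0" using assms(2) by linarith
  have "xi x < xi 0" by (rule xi_mono) (use assms x in auto)
  then have "xi x < 0" by (simp add: xi_0)
  then show ?thesis by (rule mult_neg_neg[OF x])
qed

lemma zero_urabe_V: "zero_urabe V"
  unfolding zero_urabe_def
proof (intro exI conjI)
  show "\<forall>x y. V (x, y) = (p0 x + p1 x * y, q0 x + q1 x * y + q2 x * y\<^sup>2)"
    unfolding V_def by simp
  show "zero_urabe_decomp p0 p1 q0 q1 q2"
    unfolding zero_urabe_decomp_def
  proof (intro conjI allI impI)
    show "p0 0 = 0" "q0 0 = 0" "p1 0 \<noteq> 0" by (fact p00 q00 p10)+
  next
    fix x assume nz: "p1 x \<noteq> 0"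
    have "- dp1 x * p0 x / p1 x + q1 x + dp0 x - 2 * q2 x * p0 x / p1 x
       = (- dp1 x * p0 x + q1 x * p1 x + dp0 x * p1 x - 2 * q2 x * p0 x) / p1 x"
      using nz by (simp add: diff_divide_distrib add_divide_distrib)
    also have "\<dots> = 0" by (simp only: compat div_0)
    finally show "- deriv p1 x * p0 x / p1 x + q1 x + deriv p0 x - 2 * q2 x * p0 x / p1 x = 0"
      unfolding deriv_p0 deriv_p1 .
  next
    have main: "(1/2) * (xi x * xi x) = oint 0 x (\<lambda>s. g s * exp (2 * F s)) \<and> (x \<noteq> 0 \<longrightarrow> x * xi x > 0)"
      if x: "\<bar>x\<bar> < d" for x
    proof
      have "oint 0 x (\<lambda>s. g s * exp (2 * F s)) = (\<lambda>t. (1/2) * (xi t * xi t)) x - (\<lambda>t. (1/2) * (xi t * xi t)) 0"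
      proof (rule oint_ftc)
        fix t assume "t \<in> closed_segment 0 x"
        then have t: "\<bar>t\<bar> < d" using x by (auto simp: closed_segment_eq_real_ivl split: if_splits)
        have "((\<lambda>t. (1/2) * (xi t * xi t)) has_real_derivative (1/2) * (exp (F t) * xi t + exp (F t) * xi t)) (at t)"
          by (intro DERIV_cmult DERIV_mult xi_deriv t)
        moreover have "(1/2) * (exp (F t) * xi t + exp (F t) * xi t) = g t * exp (2 * F t)"
          unfolding xi_def mult_2 exp_add by simp
        ultimately show "((\<lambda>t. (1/2) * (xi t * xi t)) has_real_derivative g t * exp (2 * F t)) (at t)"
          by simp
      qed
      then show "(1/2) * (xi x * xi x) = oint 0 x (\<lambda>s. g s * exp (2 * F s))" by (simp add: xi_0)
      show "x \<noteq> 0 \<longrightarrow> x * xi x > 0" using xi_sign[OF x] by blast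
    qed
    show "\<exists>\<delta>>0. \<forall>x. \<bar>x\<bar> < \<delta> \<longrightarrow>
        (let g = urabe_g p0 p1 q0 q1 q2; F = urabe_F p1 q2; \<xi> = g x * exp (F x) in
           (1/2) * \<xi>\<^sup>2 = oint 0 x (\<lambda>s. g s * exp (2 * F s)) \<and>
           (x \<noteq> 0 \<longrightarrow> x * \<xi> > 0))"
      unfolding Let_def g_def[symmetric] F_def[symmetric] xi_def[symmetric] power2_eq_square
      using main d_pos by blast
  qed
qed

definition "rho = min (xi (d/2)) (- xi (-(d/2)))"

lemma rho_pos: "0 < rho"
proof -
  have "xi 0 < xi (d/2)" by (rule xi_mono) (use d_pos in auto)
  moreover have "xi (-(d/2)) < xi 0" by (rule xi_mono) (use d_pos in auto)
  ultimately show ?thesis unfolding rho_def by (simp add: xi_0)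
qed

lemma isCont_xi: "\<bar>x\<bar> < d \<Longrightarrow> isCont xi x"
  by (rule DERIV_isCont, rule xi_deriv)
lemma isCont_F: "\<bar>x\<bar> < d \<Longrightarrow> isCont F x"
  by (rule DERIV_isCont, rule F_deriv)

lemma xi_cont: "continuous_on {-(d/2)..d/2} xi"
  by (rule continuous_at_imp_continuous_on) (use d_pos in \<open>auto intro!: isCont_xi\<close>)

definition "xinv u = (THE x. \<bar>x\<bar> < d \<and> xi x = u)"

lemma xi_inj: assumes "\<bar>x\<bar> < d" "\<bar>y\<bar> < d" "xi x = xi y" shows "x = y"
proof (rule ccontr)
  assume "x \<noteq> y"
  then consider "x < y" | "y < x" by linarith
  then show False
  proof cases
    case 1
    have "xi x < xi y" by (rule xi_mono) (use assms 1 in auto)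
    then show False using assms by simp
  next
    case 2
    have "xi y < xi x" by (rule xi_mono) (use assms 2 in auto)
    then show False using assms by simp
  qed
qed

lemma xinv_xi: assumes "\<bar>x\<bar> < d" shows "xinv (xi x) = x"
  unfolding xinv_def
proof (rule the_equality)
  show "\<bar>x\<bar> < d \<and> xi x = xi x" using assms by simp
  fix y assume "\<bar>y\<bar> < d \<and> xi y = xi x"
  then show "y = x" using xi_inj assms by blast
qed

lemma xinv_props: assumes "\<bar>u\<bar> < rho" shows "\<bar>xinv u\<bar> < d/2" "xi (xinv u) = u"
proof -
  have le1: "xi (-(d/2)) \<le> u" and le2: "u \<le> xi (d/2)" using assms unfolding rho_def by auto
  obtain x where x: "-(d/2) \<le> x" "x \<le> d/2" "xi x = u"
    using IVT'[of xi "-(d/2)" u "d/2", OF le1 le2 _ xi_cont] d_pos by auto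
  have "x \<noteq> d/2" using x(3) assms unfolding rho_def by auto
  moreover have "x \<noteq> -(d/2)" using x(3) assms unfolding rho_def by auto
  ultimately have xd: "\<bar>x\<bar> < d/2" using x by auto
  then have "xinv u = x" using x(3) xinv_xi[of x] by auto
  then show "\<bar>xinv u\<bar> < d/2" "xi (xinv u) = u" using xd x by auto
qed

lemma isCont_xinv: assumes "\<bar>u\<bar> < rho" shows "isCont xinv u"
proof -
  have c: "continuous_on (xi ` {-(d/2)..d/2}) xinv"
    by (rule continuous_on_inv[OF xi_cont compact_Icc]) (use d_pos in \<open>auto intro!: xinv_xi\<close>)
  have "{-rho<..<rho} \<subseteq> xi ` {-(d/2)..d/2}"
  proof
    fix v assume "v \<in> {-rho<..<rho}"
    then have v: "\<bar>v\<bar> < rho" by auto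
    show "v \<in> xi ` {-(d/2)..d/2}"
      using xinv_props[OF v] by (intro image_eqI[of _ _ "xinv v"]) auto
  qed
  then have "continuous_on {-rho<..<rho} xinv" using c by (rule continuous_on_subset[rotated])
  then show ?thesis by (rule continuous_on_interior) (use assms in auto)
qed

lemma xinv_deriv: assumes "\<bar>u\<bar> < rho" shows "(xinv has_real_derivative exp (- F (xinv u))) (at u)"
proof -
  have xd: "\<bar>xinv u\<bar> < d" using xinv_props(1)[OF assms] by auto
  have "(xinv has_real_derivative inverse (exp (F (xinv u)))) (at u)"
  proof (rule DERIV_inverse_function[where f=xi and a="-rho" and b=rho])
    show "(xi has_real_derivative exp (F (xinv u))) (at (xinv u))" by (rule xi_deriv[OF xd])
    show "exp (F (xinv u)) \<noteq> 0" by simp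
    show "-rho < u" "u < rho" using assms by auto
    show "\<And>y. -rho < y \<Longrightarrow> y < rho \<Longrightarrow> xi (xinv y) = y"
      by (rule xinv_props(2)) auto
    show "isCont xinv u" by (rule isCont_xinv[OF assms])
  qed
  then show ?thesis by (simp add: exp_minus)
qed

definition "Phi q = (xi (fst q), (p0 (fst q) + p1 (fst q) * snd q) * exp (F (fst q)))"
definition "Psi q = (xinv (fst q), (snd q * exp (- F (xinv (fst q))) - p0 (xinv (fst q))) / p1 (xinv (fst q)))"

lemma Psi_Phi: assumes "\<bar>fst q\<bar> < d" shows "Psi (Phi q) = q"
proof -
  obtain x y where q: "q = (x, y)" by fastforce
  have x: "\<bar>x\<bar> < d" using assms q by simp
  have nz: "p1 x \<noteq> 0" using p1_nz x by simp
  have e: "exp (F x) * exp (- F x) = 1" by (simp add: exp_minus)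
  have "((p0 x + p1 x * y) * exp (F x) * exp (- F x) - p0 x) / p1 x = y"
    using nz e by (simp add: field_simps)
  then show ?thesis unfolding q Phi_def Psi_def using xinv_xi[OF x] by simp
qed

lemma Phi_Psi: assumes "\<bar>fst q\<bar> < rho" shows "Phi (Psi q) = q"
proof -
  obtain u w where q: "q = (u, w)" by fastforce
  have u: "\<bar>u\<bar> < rho" using assms q by simp
  define X where "X = xinv u"
  have X: "\<bar>X\<bar> < d/2" "xi X = u" using xinv_props[OF u] X_def by auto
  have nz: "p1 X \<noteq> 0" using p1_nz X by simp
  have e: "exp (- F X) * exp (F X) = 1" by (simp add: exp_minus)
  have eq: "(p0 X + p1 X * ((w * exp (- F X) - p0 X) / p1 X)) * exp (F X) = w"
    using nz e by (simp add: field_simps)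
  have "Psi q = (X, (w * exp (- F X) - p0 X) / p1 X)" unfolding q Psi_def X_def by simp
  then show ?thesis unfolding q using X(2) eq by (simp add: Phi_def)
qed

lemma Phi_0: "Phi 0 = 0"
  unfolding Phi_def by (simp add: xi_0 p00 F_0 zero_prod_def)

lemma Psi_0: "Psi 0 = 0"
proof -
  have "xinv 0 = 0" using xinv_xi[of 0] d_pos by (simp add: xi_0)
  then show ?thesis unfolding Psi_def by (simp add: p00 F_0 zero_prod_def)
qed

lemma isCont_Phi: assumes "\<bar>fst q\<bar> < d" shows "isCont Phi q"
proof -
  have c1: "isCont (\<lambda>q. h (fst q)) q" if "isCont h (fst q)" for h :: "real \<Rightarrow> real"
  proof -
    have "isCont fst q" by (intro continuous_intros)
    from isCont_o2[OF this that] show ?thesis .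
  qed
  show ?thesis unfolding Phi_def
    by (intro continuous_intros c1 isCont_xi isCont_p0 isCont_p1 isCont_F assms)
qed

lemma isCont_Psi: assumes "\<bar>fst q\<bar> < rho" shows "isCont Psi q"
proof -
  have X: "\<bar>xinv (fst q)\<bar> < d" using xinv_props(1)[OF assms] by auto
  have c0: "isCont (\<lambda>q. xinv (fst q)) q"
  proof -
    have "isCont fst q" by (intro continuous_intros)
    from isCont_o2[OF this isCont_xinv[OF assms]] show ?thesis .
  qed
  have c1: "isCont (\<lambda>q. h (xinv (fst q))) q" if "isCont h (xinv (fst q))" for h :: "real \<Rightarrow> real"
    by (rule isCont_o2[OF c0 that])
  show ?thesis unfolding Psi_def
    by (intro continuous_intros c0 c1 isCont_divide isCont_p0 isCont_p1 isCont_F X p1_nz) (use X in auto)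
qed

lemma isochronous_V: "isochronous_center V"
proof -
  define S where "S = {-d<..<d} \<times> (UNIV :: real set)"
  define U where "U = S \<inter> Phi -` ball 0 rho"
  show ?thesis
    unfolding isochronous_center_def
  proof (intro exI[of _ U] exI[of _ "2 * pi"] conjI ballI)
  have openS: "open S" unfolding S_def by (intro open_Times) auto
  have contS: "continuous_on S Phi"
    by (rule continuous_at_imp_continuous_on) (auto simp: S_def intro!: isCont_Phi)
  show "open U" unfolding U_def by (rule continuous_open_preimage[OF contS openS open_ball])
  show "(0::real \<times> real) \<in> U" unfolding U_def S_def using d_pos rho_pos Phi_0 by (simp add: zero_prod_def)
  show "(0::real) < 2 * pi" by simp
  fix p assume pU: "p \<in> U - {0}"
  then have pS: "\<bar>fst p\<bar> < d" and pB: "norm (Phi p) < rho" and p0': "p \<noteq> 0"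
    unfolding U_def S_def by (auto simp: mem_Times_iff dist_norm)
  define u0 where "u0 = fst (Phi p)"
  define w0 where "w0 = snd (Phi p)"
  define r where "r = sqrt (u0^2 + w0^2)"
  have Phip: "Phi p = (u0, w0)" unfolding u0_def w0_def by simp
  have r_norm: "norm (Phi p) = r" unfolding Phip r_def norm_Pair by simp
  have r_rho: "r < rho" using pB r_norm by simp
  have "Phi p \<noteq> 0"
  proof
    assume "Phi p = 0"
    then have "Psi (Phi p) = 0" by (simp add: Psi_0)
    then show False using Psi_Phi[OF pS] p0' by simp
  qed
  then have r_pos: "r > 0" using r_norm by auto
  have r2: "r^2 = u0^2 + w0^2" unfolding r_def by simp
  define c where "c t = (u0 * cos t + w0 * sin t, w0 * cos t - u0 * sin t)" for t
  have c_sq: "(u0 * cos t + w0 * sin t)^2 + (w0 * cos t - u0 * sin t)^2 = r^2" for t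
  proof -
    have "(u0 * cos t + w0 * sin t)^2 + (w0 * cos t - u0 * sin t)^2
        = (u0^2 + w0^2) * ((sin t)^2 + (cos t)^2)" by algebra
    then show ?thesis using r2 by simp
  qed
  have norm_c: "norm (c t) = r" for t
    unfolding c_def norm_Pair using c_sq[of t] r_pos by (simp add: real_sqrt_unique)
  have fst_c: "\<bar>fst (c t)\<bar> < rho" for t
    using norm_fst_le[of "fst (c t)" "snd (c t)"] norm_c[of t] r_rho by simp
  define phi where "phi t = Psi (c t)" for t
  show "\<exists>\<phi>. \<phi> 0 = p \<and> (\<forall>t. (\<phi> has_vector_derivative V (\<phi> t)) (at t)) \<and>
            (\<forall>t. \<phi> (t + 2 * pi) = \<phi> t) \<and> (\<forall>s. 0 < s \<and> s < 2 * pi \<longrightarrow> \<phi> s \<noteq> p) \<and>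
            0 \<in> inside (range \<phi>)"
  proof (intro exI[of _ phi] conjI allI)
    show "phi 0 = p" unfolding phi_def c_def using Psi_Phi[OF pS] Phip by simp
    show "phi (t + 2 * pi) = phi t" for t unfolding phi_def c_def by simp
    show "(phi has_vector_derivative V (phi t)) (at t)" for t
    proof -
      define Uf where "Uf = (\<lambda>t. u0 * cos t + w0 * sin t)"
      define Wf where "Wf = (\<lambda>t. w0 * cos t - u0 * sin t)"
      define Xf where "Xf = (\<lambda>t. xinv (Uf t))"
      define Ef where "Ef = (\<lambda>t. exp (- F (Xf t)))"
      define Yf where "Yf = (\<lambda>t. (Wf t * Ef t - p0 (Xf t)) / p1 (Xf t))"
      have phi_eq: "phi = (\<lambda>t. (Xf t, Yf t))"
        by (rule ext) (simp add: phi_def c_def Psi_def Uf_def Wf_def Xf_def Ef_def Yf_def)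
      have Ut: "\<bar>Uf t\<bar> < rho" using fst_c[of t] by (simp add: c_def Uf_def)
      have X: "\<bar>Xf t\<bar> < d/2" "xi (Xf t) = Uf t" using xinv_props[OF Ut] by (auto simp: Xf_def)
      have Xd: "\<bar>Xf t\<bar> < d" using X(1) by simp
      have nz: "p1 (Xf t) \<noteq> 0" using p1_nz Xd by simp
      have hU: "(Uf has_real_derivative Wf t) (at t)"
        unfolding Uf_def Wf_def by (auto intro!: derivative_eq_intros)
      have hW: "(Wf has_real_derivative - Uf t) (at t)"
        unfolding Uf_def Wf_def by (auto intro!: derivative_eq_intros)
      have hX: "(Xf has_real_derivative Ef t * Wf t) (at t)"
        using DERIV_chain2[OF xinv_deriv[OF Ut] hU] by (simp add: Xf_def Ef_def)
      have hF: "((\<lambda>t. F (Xf t)) has_real_derivative f (Xf t) * (Ef t * Wf t)) (at t)"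
        by (rule DERIV_chain2[OF F_deriv[OF Xd] hX])
      have hE: "(Ef has_real_derivative Ef t * (- (f (Xf t) * (Ef t * Wf t)))) (at t)"
        using DERIV_chain2[OF DERIV_exp DERIV_minus[OF hF]] by (simp add: Ef_def)
      have hp0: "((\<lambda>t. p0 (Xf t)) has_real_derivative dp0 (Xf t) * (Ef t * Wf t)) (at t)"
        by (rule DERIV_chain2[OF d_p0 hX])
      have hp1: "((\<lambda>t. p1 (Xf t)) has_real_derivative dp1 (Xf t) * (Ef t * Wf t)) (at t)"
        by (rule DERIV_chain2[OF d_p1 hX])
      have hN: "((\<lambda>t. Wf t * Ef t - p0 (Xf t)) has_real_derivative
           - Uf t * Ef t + Ef t * (- (f (Xf t) * (Ef t * Wf t))) * Wf t - dp0 (Xf t) * (Ef t * Wf t)) (at t)"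
        by (rule DERIV_diff[OF DERIV_mult[OF hW hE] hp0])
      have hY0: "(Yf has_real_derivative
           ((- Uf t * Ef t + Ef t * (- (f (Xf t) * (Ef t * Wf t))) * Wf t - dp0 (Xf t) * (Ef t * Wf t)) * p1 (Xf t)
            - (Wf t * Ef t - p0 (Xf t)) * (dp1 (Xf t) * (Ef t * Wf t))) / (p1 (Xf t) * p1 (Xf t))) (at t)"
        unfolding Yf_def by (rule DERIV_divide[OF hN hp1 nz])
      have gX: "Uf t * Ef t = - q2 (Xf t) * (p0 (Xf t))\<^sup>2 / p1 (Xf t) + q1 (Xf t) * p0 (Xf t) - p1 (Xf t) * q0 (Xf t)"
      proof -
        have "Uf t * Ef t = g (Xf t) * (exp (F (Xf t)) * exp (- F (Xf t)))"
          using X(2) unfolding xi_def Ef_def by simp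
        also have "\<dots> = g (Xf t)" by (simp add: exp_minus)
        finally show ?thesis unfolding g_def urabe_g_def .
      qed
      have hY: "(Yf has_real_derivative q0 (Xf t) + q1 (Xf t) * Yf t + q2 (Xf t) * (Yf t)\<^sup>2) (at t)"
        using hY0 key_alg[OF nz _ gX compat[of "Xf t"], of "f (Xf t)" "Wf t"] f_fun
        unfolding Yf_def by simp
      have hXY: "Ef t * Wf t = p0 (Xf t) + p1 (Xf t) * Yf t"
        unfolding Yf_def using nz by (simp add: field_simps)
      have "((\<lambda>t. (Xf t, Yf t)) has_vector_derivative (Ef t * Wf t, q0 (Xf t) + q1 (Xf t) * Yf t + q2 (Xf t) * (Yf t)\<^sup>2)) (at t)"
        by (intro has_vector_derivative_Pair hX[unfolded has_real_derivative_iff_has_vector_derivative]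
              hY[unfolded has_real_derivative_iff_has_vector_derivative])
      then show ?thesis unfolding phi_eq V_def hXY by simp
    qed
    show "0 < s \<and> s < 2 * pi \<longrightarrow> phi s \<noteq> p" for s
    proof (intro impI notI)
      assume s: "0 < s \<and> s < 2 * pi"
      assume "phi s = p"
      then have "Phi (phi s) = Phi p" by simp
      then have "c s = (u0, w0)" unfolding phi_def Phip using Phi_Psi[OF fst_c[of s]] by simp
      then have e1: "u0 * cos s + w0 * sin s = u0" and e2: "w0 * cos s - u0 * sin s = w0"
        unfolding c_def by auto
      have "(u0^2 + w0^2) * cos s = u0 * (u0 * cos s + w0 * sin s) + w0 * (w0 * cos s - u0 * sin s)"
        by algebra
      also have "\<dots> = u0^2 + w0^2" unfolding e1 e2 by algebra
      finally have eq: "(u0^2 + w0^2) * cos s = (u0^2 + w0^2) * 1" by simp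
      have pos: "u0^2 + w0^2 \<noteq> 0" using r_pos unfolding r2[symmetric] by simp
      have "cos s = 1" using mult_left_cancel[OF pos] eq by blast
      then obtain n :: int where n: "s = real_of_int n * 2 * pi" by (auto simp: cos_one_2pi_int)
      have "0 < real_of_int n * (2 * pi)" using s n by (simp add: mult.assoc)
      then have a: "0 < real_of_int n" by (simp add: zero_less_mult_iff)
      have "real_of_int n * (2 * pi) < 1 * (2 * pi)" using s n by (simp add: mult.assoc)
      then have b: "real_of_int n < 1" by (rule mult_right_less_imp_less) simp
      from a b show False by simp
    qed
    show "0 \<in> inside (range phi)"
    proof -
      define A where "A = Psi ` ball 0 r"
      define B where "B = Psi ` cball 0 r"
      define C where "C = Psi ` sphere 0 r"
      have fst_lt: "\<bar>fst v\<bar> < rho" if "norm v \<le> r" for v :: "real \<times> real"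
        using norm_fst_le[of "fst v" "snd v"] that r_rho by simp
      have rangeC: "range phi = C"
      proof
        show "range phi \<subseteq> C" unfolding C_def phi_def using norm_c by (auto simp: dist_norm)
        show "C \<subseteq> range phi"
        proof
          fix z assume "z \<in> C"
          then obtain v where v: "v \<in> sphere 0 r" "z = Psi v" unfolding C_def by auto
          obtain a b where ab: "v = (a, b)" by fastforce
          have "sqrt (a^2 + b^2) = r" using v(1) ab by (simp add: dist_norm norm_Pair)
          then have "a^2 + b^2 = r^2" by (metis real_sqrt_pow2 sum_power2_ge_zero)
          then have "(a/r)^2 + (b/r)^2 = 1" using r_pos by (simp add: field_simps)
          then obtain \<beta> where be: "a/r = cos \<beta>" "b/r = sin \<beta>" by (rule sincos_total_2pi) auto
          have "(u0/r)^2 + (w0/r)^2 = (u0^2 + w0^2) / r^2" by (simp add: power_divide add_divide_distrib)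
          also have "\<dots> = 1" unfolding r2[symmetric] using r_pos by simp
          finally have "(u0/r)^2 + (w0/r)^2 = 1" .
          then obtain \<theta> where th: "u0/r = cos \<theta>" "w0/r = sin \<theta>" by (rule sincos_total_2pi) auto
          have a: "a = r * cos \<beta>" and b: "b = r * sin \<beta>" and u: "u0 = r * cos \<theta>" and w: "w0 = r * sin \<theta>"
            using be th r_pos by (auto simp: field_simps)
          have "c (\<theta> - \<beta>) = (a, b)"
          proof -
            have "u0 * cos (\<theta> - \<beta>) + w0 * sin (\<theta> - \<beta>) = r * cos (\<theta> - (\<theta> - \<beta>))"
              unfolding u w cos_diff[of \<theta> "\<theta> - \<beta>"] by (simp add: algebra_simps)
            moreover have "w0 * cos (\<theta> - \<beta>) - u0 * sin (\<theta> - \<beta>) = r * sin (\<theta> - (\<theta> - \<beta>))"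
              unfolding u w sin_diff[of \<theta> "\<theta> - \<beta>"] by (simp add: algebra_simps)
            ultimately show ?thesis unfolding c_def a b by simp
          qed
          then show "z \<in> range phi" unfolding phi_def v(2) ab by (metis rangeI)
        qed
      qed
      have A_eq: "A = S \<inter> Phi -` ball 0 r"
      proof
        show "A \<subseteq> S \<inter> Phi -` ball 0 r"
        proof
          fix z assume "z \<in> A"
          then obtain v where v: "v \<in> ball 0 r" "z = Psi v" unfolding A_def by auto
          have nv: "norm v < r" using v(1) by (simp add: dist_norm)
          have fv: "\<bar>fst v\<bar> < rho" using fst_lt[of v] nv by simp
          have "\<bar>fst z\<bar> < d" using xinv_props(1)[OF fv] d_pos v(2) by (simp add: Psi_def)
          moreover have "Phi z = v" using Phi_Psi[OF fv] v(2) by simp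
          ultimately show "z \<in> S \<inter> Phi -` ball 0 r" using v(1) unfolding S_def by (auto simp: mem_Times_iff)
        qed
        show "S \<inter> Phi -` ball 0 r \<subseteq> A"
        proof
          fix z assume z: "z \<in> S \<inter> Phi -` ball 0 r"
          then have "\<bar>fst z\<bar> < d" unfolding S_def by (auto simp: mem_Times_iff)
          then have "z = Psi (Phi z)" using Psi_Phi by simp
          then show "z \<in> A" unfolding A_def using z by auto
        qed
      qed
      have openA: "open A" unfolding A_eq by (rule continuous_open_preimage[OF contS openS open_ball])
      have contB: "continuous_on (cball 0 r) Psi"
      proof (rule continuous_at_imp_continuous_on, rule ballI)
        fix v :: "real \<times> real" assume "v \<in> cball 0 r"
        then have "norm v \<le> r" by (simp add: mem_cball_0)
        then show "isCont Psi v" by (intro isCont_Psi fst_lt)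
      qed
      have compB: "compact B" unfolding B_def by (rule compact_continuous_image[OF contB compact_cball])
      have BAC: "B \<subseteq> A \<union> C"
      proof
        fix z assume "z \<in> B"
        then obtain v where v: "norm v \<le> r" "z = Psi v" unfolding B_def by (auto simp: mem_cball_0)
        show "z \<in> A \<union> C"
        proof (cases "norm v = r")
          case True
          then show ?thesis unfolding C_def using v by (auto simp: mem_sphere_0)
        next
          case False
          then have "norm v < r" using v by simp
          then show ?thesis unfolding A_def using v by (auto simp: mem_ball_0)
        qed
      qed
      have AB: "A \<subseteq> B" unfolding A_def B_def by auto
      have frA: "frontier A \<subseteq> C"
      proof -
        have "closure A \<subseteq> B" by (rule closure_minimal[OF AB compact_imp_closed[OF compB]])
        then show ?thesis unfolding frontier_def interior_open[OF openA] using BAC by auto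
      qed
      have zA: "0 \<in> A" unfolding A_def using r_pos Psi_0 by (auto intro!: image_eqI[of _ _ 0])
      have zC: "0 \<notin> C"
      proof
        assume "0 \<in> C"
        then obtain v where v: "v \<in> sphere 0 r" "Psi v = 0" unfolding C_def by auto
        have "norm v = r" using v(1) by (simp add: dist_norm)
        then have "Phi (Psi v) = v" using Phi_Psi fst_lt by simp
        then have "v = 0" using v(2) Phi_0 by simp
        then show False using \<open>norm v = r\<close> r_pos by simp
      qed
      define K where "K = connected_component_set (- range phi) 0"
      have K0: "0 \<in> K" unfolding K_def using zC rangeC by (simp add: connected_component_refl)
      have KC: "K \<inter> C = {}" unfolding K_def using connected_component_subset rangeC by blast
      have "K \<subseteq> A"
      proof (rule ccontr)
        assume "\<not> K \<subseteq> A"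
        then have "K - A \<noteq> {}" by auto
        moreover have "K \<inter> A \<noteq> {}" using K0 zA by auto
        ultimately have "K \<inter> frontier A \<noteq> {}"
          by (intro connected_Int_frontier) (auto simp: K_def)
        then show False using KC frA by auto
      qed
      then have "bounded K" using AB compact_imp_bounded[OF compB] bounded_subset by blast
      then show ?thesis unfolding inside_def K_def using zC rangeC by simp
    qed
  qed
qed
qed

end

lemma (in usys) result: "isochronous_center V \<and> zero_urabe V"
proof -
  obtain e where e: "e > 0" "\<And>y. dist 0 y < e \<Longrightarrow> p1 y \<noteq> 0"
    using continuous_at_avoid[OF isCont_p1 p10] by blast
  interpret u2: usys2 p0 p1 q0 q1 q2 dp0 dp1 dq0 dq1 dq2 "e/2"
  proof unfold_locales
    show "0 < e/2" using e by simp
    fix x :: real assume "\<bar>x\<bar> \<le> e/2"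
    then show "p1 x \<noteq> 0" using e by (simp add: dist_real_def)
  qed
  show ?thesis using u2.isochronous_V u2.zero_urabe_V by simp
qed

lemma fam2:
  fixes a :: real
  shows "let V = (\<lambda>(x::real, y::real).
        (- y + a * x * y + 15/8 * a^2 * x^2 * y + x^2 - a * x^3 - 15/8 * a^2 * x^4,
         x - a/2 * y^2 - 2 * x * y + 3 * a / 4 * x^2 + 15/4 * a^2 * x * y^2 + 3 * a * x^2 * y
           + 2 * x^3 - 15/4 * a^2 * x^3 * y - 5 * a / 2 * x^4))
      in isochronous_center V \<and> zero_urabe V"
proof -
  define P0 where "P0 = (\<lambda>x::real. x^2 - a * x^3 - 15/8 * a^2 * x^4)"
  define P1 where "P1 = (\<lambda>x::real. -1 + a * x + 15/8 * a^2 * x^2)"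
  define Q0 where "Q0 = (\<lambda>x::real. x + 3 * a / 4 * x^2 + 2 * x^3 - 5 * a / 2 * x^4)"
  define Q1 where "Q1 = (\<lambda>x::real. -2 * x + 3 * a * x^2 - 15/4 * a^2 * x^3)"
  define Q2 where "Q2 = (\<lambda>x::real. - a/2 + 15/4 * a^2 * x)"
  define DP0 where "DP0 = (\<lambda>x::real. 2 * x - 3 * a * x^2 - 15/2 * a^2 * x^3)"
  define DP1 where "DP1 = (\<lambda>x::real. a + 15/4 * a^2 * x)"
  define DQ0 where "DQ0 = (\<lambda>x::real. 1 + 3 * a / 2 * x + 6 * x^2 - 10 * a * x^3)"
  define DQ1 where "DQ1 = (\<lambda>x::real. -2 + 6 * a * x - 45/4 * a^2 * x^2)"
  define DQ2 where "DQ2 = (\<lambda>x::real. 15/4 * a^2)"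
  have U: "usys P0 P1 Q0 Q1 Q2 DP0 DP1 DQ0 DQ1 DQ2"
    unfolding usys_def
  proof (intro conjI allI)
    fix x :: real
    show "(P0 has_real_derivative DP0 x) (at x)" unfolding P0_def DP0_def
      by (auto intro!: derivative_eq_intros simp: algebra_simps)
    show "(P1 has_real_derivative DP1 x) (at x)" unfolding P1_def DP1_def
      by (auto intro!: derivative_eq_intros simp: algebra_simps)
    show "(Q0 has_real_derivative DQ0 x) (at x)" unfolding Q0_def DQ0_def
      by (auto intro!: derivative_eq_intros simp: algebra_simps)
    show "(Q1 has_real_derivative DQ1 x) (at x)" unfolding Q1_def DQ1_def
      by (auto intro!: derivative_eq_intros simp: algebra_simps)
    show "(Q2 has_real_derivative DQ2 x) (at x)" unfolding Q2_def DQ2_def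
      by (auto intro!: derivative_eq_intros simp: algebra_simps)
    show "- DP1 x * P0 x + Q1 x * P1 x + DP0 x * P1 x - 2 * Q2 x * P0 x = 0"
      unfolding P0_def P1_def Q1_def Q2_def DP0_def DP1_def by algebra
    show "(-(DQ2 x * (P0 x)^2 + 2 * Q2 x * P0 x * DP0 x) + DQ1 x * P0 x * P1 x
       + Q1 x * DP0 x * P1 x + Q1 x * P0 x * DP1 x - 2 * P1 x * DP1 x * Q0 x - (P1 x)^2 * DQ0 x) * P1 x
       - 2 * (- Q2 x * (P0 x)^2 + Q1 x * P0 x * P1 x - (P1 x)^2 * Q0 x) * DP1 x
       - Q2 x * (- Q2 x * (P0 x)^2 + Q1 x * P0 x * P1 x - (P1 x)^2 * Q0 x) = (P1 x)^2"
      unfolding P0_def P1_def Q0_def Q1_def Q2_def DP0_def DP1_def DQ0_def DQ1_def DQ2_def by algebra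
  next
    show "continuous_on UNIV DP1" unfolding DP1_def by (intro continuous_intros)
    show "P0 0 = 0" "Q0 0 = 0" "P1 0 \<noteq> 0" by (simp_all add: P0_def Q0_def P1_def)
  qed
  have R: "isochronous_center (usys.V P0 P1 Q0 Q1 Q2) \<and> zero_urabe (usys.V P0 P1 Q0 Q1 Q2)"
    by (rule usys.result[OF U])
  have "(\<lambda>(x::real, y::real).
        (- y + a * x * y + 15/8 * a^2 * x^2 * y + x^2 - a * x^3 - 15/8 * a^2 * x^4,
         x - a/2 * y^2 - 2 * x * y + 3 * a / 4 * x^2 + 15/4 * a^2 * x * y^2 + 3 * a * x^2 * y
           + 2 * x^3 - 15/4 * a^2 * x^3 * y - 5 * a / 2 * x^4)) = usys.V P0 P1 Q0 Q1 Q2"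
    apply (simp only: usys.V_apply[OF U] fun_eq_iff split_paired_All prod.case prod.inject)
    apply (simp only: P0_def P1_def Q0_def Q1_def Q2_def)
    apply (intro allI conjI)
     apply algebra
    apply algebra
    done
  then show ?thesis using R by (simp add: Let_def)
qed


lemma fam1:
  fixes \<sigma> :: real
  assumes sig: "\<sigma> \<in> {1, -1}"
  shows "let V = (\<lambda>(x::real, y::real).
        (- y + (-2 + 2 * sqrt 19) * x^2 * y + x^2 - (-2 + 2 * sqrt 19) * x^4,
         x + \<sigma> * alpha1 * y^2 - 2 * x * y - \<sigma> * (alpha1 / 2) * x^2 + alpha2 * x * y^2
           - \<sigma> * 2 * alpha1 * x^2 * y + alpha4 * x^3 + alpha3 * x^3 * y
           + \<sigma> * 4 * alpha1 * x^4))
      in isochronous_center V \<and> zero_urabe V"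
proof -
  define b where "b = \<sigma> * alpha1"
  define s where "s = sqrt 19"
  have s2: "(sqrt 19)^2 = (19::real)" by simp
  have "(4::real) \<le> sqrt 19" by (rule real_le_rsqrt) simp
  then have "0 \<le> -106 + 34 * sqrt (19::real)" by simp
  then have a2: "alpha1^2 = -106 + 34 * sqrt 19" unfolding alpha1_def by simp
  have "\<sigma>^2 = 1" using sig by auto
  then have "b^2 = alpha1^2" unfolding b_def by (simp add: power_mult_distrib)
  then have h2: "b^2 + 106 - 34 * s = 0" using a2 unfolding s_def by simp
  have h1: "s^2 - 19 = 0" unfolding s_def by simp
  define P0 where "P0 = (\<lambda>x::real. x^2 - (-2 + 2 * s) * x^4)"
  define P1 where "P1 = (\<lambda>x::real. -1 + (-2 + 2 * s) * x^2)"
  define Q0 where "Q0 = (\<lambda>x::real. x - b / 2 * x^2 + alpha4 * x^3 + 4 * b * x^4)"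
  define Q1 where "Q1 = (\<lambda>x::real. -2 * x - 2 * b * x^2 + alpha3 * x^3)"
  define Q2 where "Q2 = (\<lambda>x::real. b + alpha2 * x)"
  define DP0 where "DP0 = (\<lambda>x::real. 2 * x - 4 * (-2 + 2 * s) * x^3)"
  define DP1 where "DP1 = (\<lambda>x::real. 2 * (-2 + 2 * s) * x)"
  define DQ0 where "DQ0 = (\<lambda>x::real. 1 - b * x + 3 * alpha4 * x^2 + 16 * b * x^3)"
  define DQ1 where "DQ1 = (\<lambda>x::real. -2 - 4 * b * x + 3 * alpha3 * x^2)"
  define DQ2 where "DQ2 = (\<lambda>x::real. alpha2)"
  have U: "usys P0 P1 Q0 Q1 Q2 DP0 DP1 DQ0 DQ1 DQ2"
    unfolding usys_def
  proof (intro conjI allI)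
    fix x :: real
    show "(P0 has_real_derivative DP0 x) (at x)" unfolding P0_def DP0_def
      by (auto intro!: derivative_eq_intros simp: algebra_simps)
    show "(P1 has_real_derivative DP1 x) (at x)" unfolding P1_def DP1_def
      by (auto intro!: derivative_eq_intros simp: algebra_simps)
    show "(Q0 has_real_derivative DQ0 x) (at x)" unfolding Q0_def DQ0_def
      by (auto intro!: derivative_eq_intros simp: algebra_simps)
    show "(Q1 has_real_derivative DQ1 x) (at x)" unfolding Q1_def DQ1_def
      by (auto intro!: derivative_eq_intros simp: algebra_simps)
    show "(Q2 has_real_derivative DQ2 x) (at x)" unfolding Q2_def DQ2_def
      by (auto intro!: derivative_eq_intros simp: algebra_simps)
    show "- DP1 x * P0 x + Q1 x * P1 x + DP0 x * P1 x - 2 * Q2 x * P0 x = 0"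
      unfolding P0_def P1_def Q1_def Q2_def DP0_def DP1_def alpha2_def alpha3_def alpha4_def s_def[symmetric] by algebra
    show "(-(DQ2 x * (P0 x)^2 + 2 * Q2 x * P0 x * DP0 x) + DQ1 x * P0 x * P1 x
       + Q1 x * DP0 x * P1 x + Q1 x * P0 x * DP1 x - 2 * P1 x * DP1 x * Q0 x - (P1 x)^2 * DQ0 x) * P1 x
       - 2 * (- Q2 x * (P0 x)^2 + Q1 x * P0 x * P1 x - (P1 x)^2 * Q0 x) * DP1 x
       - Q2 x * (- Q2 x * (P0 x)^2 + Q1 x * P0 x * P1 x - (P1 x)^2 * Q0 x) = (P1 x)^2"
      unfolding P0_def P1_def Q0_def Q1_def Q2_def DP0_def DP1_def DQ0_def DQ1_def DQ2_def alpha2_def alpha3_def alpha4_def s_def[symmetric]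
      using h1 h2 by algebra
  next
    show "continuous_on UNIV DP1" unfolding DP1_def by (intro continuous_intros)
    show "P0 0 = 0" "Q0 0 = 0" "P1 0 \<noteq> 0" by (simp_all add: P0_def Q0_def P1_def)
  qed
  have R: "isochronous_center (usys.V P0 P1 Q0 Q1 Q2) \<and> zero_urabe (usys.V P0 P1 Q0 Q1 Q2)"
    by (rule usys.result[OF U])
  have "(\<lambda>(x::real, y::real).
        (- y + (-2 + 2 * sqrt 19) * x^2 * y + x^2 - (-2 + 2 * sqrt 19) * x^4,
         x + \<sigma> * alpha1 * y^2 - 2 * x * y - \<sigma> * (alpha1 / 2) * x^2 + alpha2 * x * y^2
           - \<sigma> * 2 * alpha1 * x^2 * y + alpha4 * x^3 + alpha3 * x^3 * y
           + \<sigma> * 4 * alpha1 * x^4)) = usys.V P0 P1 Q0 Q1 Q2"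
    apply (simp only: usys.V_apply[OF U] fun_eq_iff split_paired_All prod.case prod.inject)
    apply (simp only: P0_def P1_def Q0_def Q1_def Q2_def b_def s_def)
    apply (intro allI conjI)
     apply algebra
    apply algebra
    done
  then show ?thesis using R by (simp add: Let_def)
qed

lemma fam3:
  fixes \<sigma> :: real
  assumes sig: "\<sigma> \<in> {1, -1}"
  shows "let V = (\<lambda>(x::real, y::real).
        (- y - \<sigma> * (2/35) * alpha5 * x * y + alpha6 * x^2 * y + x^2
           + \<sigma> * (2/35) * alpha5 * x^3 - alpha6 * x^4,
         x + \<sigma> * (alpha5 / 35) * y^2 - 2 * x * y - \<sigma> * (3/70) * alpha5 * x^2
           + 5 * alpha6 * x * y^2 - \<sigma> * (6/35) * alpha5 * x^2 * y + alpha7 * x^3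
           - 8 * alpha6 * x^3 * y + \<sigma> * (38/35) * alpha5 * x^4))
      in isochronous_center V \<and> zero_urabe V"
proof -
  define b where "b = \<sigma> * alpha5"
  define s where "s = sqrt 4691"
  have "(67::real) \<le> sqrt 4691" by (rule real_le_rsqrt) simp
  then have "0 \<le> -77798 + 1162 * sqrt (4691::real)" by simp
  then have a2: "alpha5^2 = -77798 + 1162 * sqrt 4691" unfolding alpha5_def by simp
  have "\<sigma>^2 = 1" using sig by auto
  then have "b^2 = alpha5^2" unfolding b_def by (simp add: power_mult_distrib)
  then have h2: "b^2 + 77798 - 1162 * s = 0" using a2 unfolding s_def by simp
  have h1: "s^2 - 4691 = 0" unfolding s_def by simp
  define P0 where "P0 = (\<lambda>x::real. x^2 + 2/35 * b * x^3 - alpha6 * x^4)"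
  define P1 where "P1 = (\<lambda>x::real. -1 - 2/35 * b * x + alpha6 * x^2)"
  define Q0 where "Q0 = (\<lambda>x::real. x - 3/70 * b * x^2 + alpha7 * x^3 + 38/35 * b * x^4)"
  define Q1 where "Q1 = (\<lambda>x::real. -2 * x - 6/35 * b * x^2 - 8 * alpha6 * x^3)"
  define Q2 where "Q2 = (\<lambda>x::real. b / 35 + 5 * alpha6 * x)"
  define DP0 where "DP0 = (\<lambda>x::real. 2 * x + 6/35 * b * x^2 - 4 * alpha6 * x^3)"
  define DP1 where "DP1 = (\<lambda>x::real. - 2/35 * b + 2 * alpha6 * x)"
  define DQ0 where "DQ0 = (\<lambda>x::real. 1 - 3/35 * b * x + 3 * alpha7 * x^2 + 152/35 * b * x^3)"
  define DQ1 where "DQ1 = (\<lambda>x::real. -2 - 12/35 * b * x - 24 * alpha6 * x^2)"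
  define DQ2 where "DQ2 = (\<lambda>x::real. 5 * alpha6)"
  have U: "usys P0 P1 Q0 Q1 Q2 DP0 DP1 DQ0 DQ1 DQ2"
    unfolding usys_def
  proof (intro conjI allI)
    fix x :: real
    show "(P0 has_real_derivative DP0 x) (at x)" unfolding P0_def DP0_def
      by (auto intro!: derivative_eq_intros simp: algebra_simps)
    show "(P1 has_real_derivative DP1 x) (at x)" unfolding P1_def DP1_def
      by (auto intro!: derivative_eq_intros simp: algebra_simps)
    show "(Q0 has_real_derivative DQ0 x) (at x)" unfolding Q0_def DQ0_def
      by (auto intro!: derivative_eq_intros simp: algebra_simps)
    show "(Q1 has_real_derivative DQ1 x) (at x)" unfolding Q1_def DQ1_def
      by (auto intro!: derivative_eq_intros simp: algebra_simps)
    show "(Q2 has_real_derivative DQ2 x) (at x)" unfolding Q2_def DQ2_def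
      by (auto intro!: derivative_eq_intros simp: algebra_simps)
    show "- DP1 x * P0 x + Q1 x * P1 x + DP0 x * P1 x - 2 * Q2 x * P0 x = 0"
      unfolding P0_def P1_def Q1_def Q2_def DP0_def DP1_def alpha6_def alpha7_def s_def[symmetric] by algebra
    show "(-(DQ2 x * (P0 x)^2 + 2 * Q2 x * P0 x * DP0 x) + DQ1 x * P0 x * P1 x
       + Q1 x * DP0 x * P1 x + Q1 x * P0 x * DP1 x - 2 * P1 x * DP1 x * Q0 x - (P1 x)^2 * DQ0 x) * P1 x
       - 2 * (- Q2 x * (P0 x)^2 + Q1 x * P0 x * P1 x - (P1 x)^2 * Q0 x) * DP1 x
       - Q2 x * (- Q2 x * (P0 x)^2 + Q1 x * P0 x * P1 x - (P1 x)^2 * Q0 x) = (P1 x)^2"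
      unfolding P0_def P1_def Q0_def Q1_def Q2_def DP0_def DP1_def DQ0_def DQ1_def DQ2_def alpha6_def alpha7_def s_def[symmetric]
      using h1 h2 by algebra
  next
    show "continuous_on UNIV DP1" unfolding DP1_def by (intro continuous_intros)
    show "P0 0 = 0" "Q0 0 = 0" "P1 0 \<noteq> 0" by (simp_all add: P0_def Q0_def P1_def)
  qed
  have R: "isochronous_center (usys.V P0 P1 Q0 Q1 Q2) \<and> zero_urabe (usys.V P0 P1 Q0 Q1 Q2)"
    by (rule usys.result[OF U])
  have "(\<lambda>(x::real, y::real).
        (- y - \<sigma> * (2/35) * alpha5 * x * y + alpha6 * x^2 * y + x^2
           + \<sigma> * (2/35) * alpha5 * x^3 - alpha6 * x^4,
         x + \<sigma> * (alpha5 / 35) * y^2 - 2 * x * y - \<sigma> * (3/70) * alpha5 * x^2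
           + 5 * alpha6 * x * y^2 - \<sigma> * (6/35) * alpha5 * x^2 * y + alpha7 * x^3
           - 8 * alpha6 * x^3 * y + \<sigma> * (38/35) * alpha5 * x^4)) = usys.V P0 P1 Q0 Q1 Q2"
    apply (simp only: usys.V_apply[OF U] fun_eq_iff split_paired_All prod.case prod.inject)
    apply (simp only: P0_def P1_def Q0_def Q1_def Q2_def b_def s_def)
    apply (intro allI conjI)
     apply algebra
    apply algebra
    done
  then show ?thesis using R by (simp add: Let_def)
qed


theorem theorem4p2:
  shows
   "(\<forall>\<sigma>::real \<in> {1, -1}.
      let V = (\<lambda>(x::real, y::real).
        (- y + (-2 + 2 * sqrt 19) * x^2 * y + x^2 - (-2 + 2 * sqrt 19) * x^4,
         x + \<sigma> * alpha1 * y^2 - 2 * x * y - \<sigma> * (alpha1 / 2) * x^2 + alpha2 * x * y^2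
           - \<sigma> * 2 * alpha1 * x^2 * y + alpha4 * x^3 + alpha3 * x^3 * y
           + \<sigma> * 4 * alpha1 * x^4))
      in isochronous_center V \<and> zero_urabe V)
  \<and> (\<forall>a::real.
      let V = (\<lambda>(x::real, y::real).
        (- y + a * x * y + 15/8 * a^2 * x^2 * y + x^2 - a * x^3 - 15/8 * a^2 * x^4,
         x - a/2 * y^2 - 2 * x * y + 3 * a / 4 * x^2 + 15/4 * a^2 * x * y^2 + 3 * a * x^2 * y
           + 2 * x^3 - 15/4 * a^2 * x^3 * y - 5 * a / 2 * x^4))
      in isochronous_center V \<and> zero_urabe V)
  \<and> (\<forall>\<sigma>::real \<in> {1, -1}.
      let V = (\<lambda>(x::real, y::real).
        (- y - \<sigma> * (2/35) * alpha5 * x * y + alpha6 * x^2 * y + x^2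
           + \<sigma> * (2/35) * alpha5 * x^3 - alpha6 * x^4,
         x + \<sigma> * (alpha5 / 35) * y^2 - 2 * x * y - \<sigma> * (3/70) * alpha5 * x^2
           + 5 * alpha6 * x * y^2 - \<sigma> * (6/35) * alpha5 * x^2 * y + alpha7 * x^3
           - 8 * alpha6 * x^3 * y + \<sigma> * (38/35) * alpha5 * x^4))
      in isochronous_center V \<and> zero_urabe V)"
    using fam1 fam2 fam3 by blast

end
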